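(* Let $n$ be a power of $2$, $\delta\in(0,1)$, and $y_i=\theta_i+\epsilon_i$ ($i=1,\dots,n$) with $\epsilon_i$ i.i.d. mean-zero $\sigma$-sub-Gaussian. For $t\in\{1,\dots,n\}$ let $\bar\theta_{t:1}=(\theta_1+\dots+\theta_t)/t$. For $r\in\{1,\dots,n\}$ let $S(r)=\{1,2,4,\dots,2^{\lfloor\log_2 r\rfloor}\}$ and $$U(r)=\Big(\max_{t\in S(r)}|\bar\theta_{t:1}-\theta_1|\Big)\vee\frac{\sigma}{\sqrt r},$$ and let $r^*$ be the smallest $r\in\{1,\dots,n\}$ attaining $\min_{r}U(r)$. Let $\hat\theta_1$ be the output of Algorithm 1 run with the orthonormal Haar transform matrix and threshold $\lambda=2\sigma\sqrt{2\log(\log n/\delta)}$. Then with probability at least $1-\delta$, $$|\hat\theta_1-\theta_1|\le\kappa\cdot U(r^* ),\qquad \kappa=\Big(4\sqrt{2\log(\log n/\delta)}\vee 2\sqrt2\Big)(\log_2 n+1).$$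
   Context: $a\vee b=\max\{a,b\}$. $\sigma$-sub-Gaussian: $\mathbb E[e^{s\epsilon}]\le e^{s^2\sigma^2/2}$ for all $s$. Algorithm 1 with input $y_n,\dots,y_1$, orthonormal $\mathbf W$, threshold $\lambda$: set $\mathbf y=(y_n,\dots,y_1)^T$, $\tilde{\boldsymbol\beta}=\mathbf W\mathbf y$, $\hat\beta_i=\mathrm{sign}(\tilde\beta_i)\max\{|\tilde\beta_i|-\lambda,0\}$, $\hat{\boldsymbol\theta}=\mathbf W^T\hat{\boldsymbol\beta}$, output the last coordinate $\hat\theta_1$ of $\hat{\boldsymbol\theta}$. The orthonormal Haar matrix: first row constant $1/\sqrt n$; for $j\in\{0,\dots,\log_2 n-1\}$, $k\in\{0,\dots,2^j-1\}$, a row supported on positions $kn/2^j+1,\dots,(k+1)n/2^j$ equal to $+\sqrt{2^j/n}$ on the first half of the block and $-\sqrt{2^j/n}$ on the second half. *)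

theory Defs
  imports "HOL-Probability.Probability"
begin

text \<open>Orthonormal Haar matrix of size n (n a power of 2), 0-based indices. Row i \<ge> 1 is written i = 2^j + k with
  j = floor(log2 i), 0 \<le> k < 2^j; it is supported on the (0-based) positions
  k*n/2^j, ..., (k+1)*n/2^j - 1, equal to +sqrt(2^j/n) on the first half of
  the block and -sqrt(2^j/n) on the second half.\<close>
definition haar :: "nat \<Rightarrow> nat \<Rightarrow> nat \<Rightarrow> real" where
  "haar n i p =
     (if i = 0 then 1 / sqrt (real n)
      else (let j = nat \<lfloor>log 2 (real i)\<rfloor>; k = i - 2 ^ j; b = n div 2 ^ j in
            if k * b \<le> p \<and> p < k * b + b div 2 then sqrt (2 ^ j / real n)
            else if k * b + b div 2 \<le> p \<and> p < (k + 1) * b then - sqrt (2 ^ j / real n)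
            else 0))"

definition soft_thresh :: "real \<Rightarrow> real \<Rightarrow> real" where
  "soft_thresh lam b = sgn b * max (\<bar>b\<bar> - lam) 0"

text \<open>Algorithm 1. Input y :: nat => real with y_1,...,y_n at indices 1..n.
  W is an n x n matrix given by 0-based entries W i p.
  Output: last coordinate (0-based index n-1) of W^T (soft-thresholded W y).\<close>
definition alg1 :: "nat \<Rightarrow> (nat \<Rightarrow> nat \<Rightarrow> real) \<Rightarrow> real \<Rightarrow> (nat \<Rightarrow> real) \<Rightarrow> real" where
  "alg1 n W lam y =
     (let yv = (\<lambda>p. y (n - p));
          btil = (\<lambda>i. \<Sum>p<n. W i p * yv p);
          bhat = (\<lambda>i. soft_thresh lam (btil i))
      in \<Sum>i<n. W i (n - 1) * bhat i)"

definition run_mean :: "(nat \<Rightarrow> real) \<Rightarrow> nat \<Rightarrow> real" where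
  "run_mean \<theta> t = (\<Sum>i=1..t. \<theta> i) / real t"

definition S_set :: "nat \<Rightarrow> nat set" where
  "S_set r = {2 ^ k | k. k \<le> nat \<lfloor>log 2 (real r)\<rfloor>}"

definition U_fun :: "real \<Rightarrow> (nat \<Rightarrow> real) \<Rightarrow> nat \<Rightarrow> real" where
  "U_fun \<sigma> \<theta> r = max (Max ((\<lambda>t. \<bar>run_mean \<theta> t - \<theta> 1\<bar>) ` S_set r)) (\<sigma> / sqrt (real r))"

definition r_star :: "nat \<Rightarrow> real \<Rightarrow> (nat \<Rightarrow> real) \<Rightarrow> nat" where
  "r_star n \<sigma> \<theta> = (LEAST r. r \<in> {1..n} \<and> U_fun \<sigma> \<theta> r = Min (U_fun \<sigma> \<theta> ` {1..n}))"

definition sub_gaussian :: "'a measure \<Rightarrow> real \<Rightarrow> ('a \<Rightarrow> real) \<Rightarrow> bool" where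
  "sub_gaussian M \<sigma> X \<longleftrightarrow>
     (\<forall>s::real. integrable M (\<lambda>x. exp (s * X x)) \<and>
        (\<integral>x. exp (s * X x) \<partial>M) \<le> exp (s^2 * \<sigma>^2 / 2))"

end

theory Submission
  imports Defs "HOL-Analysis.Harmonic_Numbers"
begin


lemma subg_neg:
  assumes "sub_gaussian M \<sigma> X" shows "sub_gaussian M \<sigma> (\<lambda>x. - X x)"
  unfolding sub_gaussian_def
proof
  fix s :: real
  have "integrable M (\<lambda>x. exp ((-s) * X x)) \<and> (\<integral>x. exp ((-s) * X x) \<partial>M) \<le> exp ((-s)^2 * \<sigma>^2 / 2)"
    using assms unfolding sub_gaussian_def by blast
  then show "integrable M (\<lambda>x. exp (s * - X x)) \<and> (\<integral>x. exp (s * - X x) \<partial>M) \<le> exp (s^2 * \<sigma>^2 / 2)"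
    by simp
qed

lemma subg_tail1:
  assumes P: "prob_space M" and Xm: "X \<in> borel_measurable M" and sg: "sub_gaussian M \<sigma> X"
    and "\<sigma> > 0" "t \<ge> 0"
  shows "measure M {x\<in>space M. X x \<ge> t} \<le> exp (- (t^2) / (2 * \<sigma>^2))"
proof -
  interpret prob_space M by (rule P)
  define s where "s = t / \<sigma>^2"
  have int: "integrable M (\<lambda>x. exp (s * X x))" and bd: "(\<integral>x. exp (s * X x) \<partial>M) \<le> exp (s^2 * \<sigma>^2 / 2)"
    using sg unfolding sub_gaussian_def by auto
  have s0: "s \<ge> 0" using assms by (simp add: s_def)
  have "{x\<in>space M. X x \<ge> t} \<subseteq> {x\<in>space M. exp (s * X x) \<ge> exp (s * t)}"
    using s0 by (auto intro: mult_left_mono)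
  hence "measure M {x\<in>space M. X x \<ge> t} \<le> measure M {x\<in>space M. exp (s * X x) \<ge> exp (s * t)}"
    using Xm by (intro finite_measure_mono) auto
  also have "\<dots> \<le> (\<integral>x. exp (s * X x) \<partial>M) / exp (s * t)"
    using int Xm by (intro integral_Markov_inequality_measure[where A="space M"]) auto
  also have "\<dots> \<le> exp (s^2 * \<sigma>^2 / 2) / exp (s * t)"
    using bd by (simp add: divide_right_mono)
  also have "\<dots> = exp (s^2 * \<sigma>^2 / 2 - s * t)" by (simp add: exp_diff)
  also have "s^2 * \<sigma>^2 / 2 - s * t = - (t^2) / (2 * \<sigma>^2)"
    using \<open>\<sigma> > 0\<close> by (simp add: s_def field_simps power2_eq_square)
  finally show ?thesis .
qed

lemma subg_tail:
  assumes P: "prob_space M" and Xm: "X \<in> borel_measurable M" and sg: "sub_gaussian M \<sigma> X"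
    and "\<sigma> > 0" "t \<ge> 0"
  shows "measure M {x\<in>space M. \<bar>X x\<bar> > t} \<le> 2 * exp (- (t^2) / (2 * \<sigma>^2))"
proof -
  interpret prob_space M by (rule P)
  have "{x\<in>space M. \<bar>X x\<bar> > t} \<subseteq> {x\<in>space M. X x \<ge> t} \<union> {x\<in>space M. - X x \<ge> t}" by auto
  hence "measure M {x\<in>space M. \<bar>X x\<bar> > t} \<le> measure M ({x\<in>space M. X x \<ge> t} \<union> {x\<in>space M. - X x \<ge> t})"
    using Xm by (intro finite_measure_mono) auto
  also have "\<dots> \<le> measure M {x\<in>space M. X x \<ge> t} + measure M {x\<in>space M. - X x \<ge> t}"
    using Xm by (intro measure_Un_le) auto
  also have "\<dots> \<le> exp (- (t^2) / (2 * \<sigma>^2)) + exp (- (t^2) / (2 * \<sigma>^2))"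
    by (intro add_mono subg_tail1 subg_neg assms) (use Xm in auto)
  finally show ?thesis by simp
qed

lemma subg_lin:
  assumes P: "prob_space M" and fin: "finite I" and ind: "prob_space.indep_vars M (\<lambda>_. borel) \<epsilon> I"
    and rv: "\<And>i. i \<in> I \<Longrightarrow> \<epsilon> i \<in> borel_measurable M"
    and sg: "\<And>i. i \<in> I \<Longrightarrow> sub_gaussian M \<sigma> (\<epsilon> i)"
    and a: "(\<Sum>i\<in>I. (a i)^2) \<le> 1"
  shows "sub_gaussian M \<sigma> (\<lambda>x. \<Sum>i\<in>I. a i * \<epsilon> i x)"
  unfolding sub_gaussian_def
proof
  interpret prob_space M by (rule P)
  fix s :: real
  define Y where "Y i x = exp ((s * a i) * \<epsilon> i x)" for i x
  have eq: "exp (s * (\<Sum>i\<in>I. a i * \<epsilon> i x)) = (\<Prod>i\<in>I. Y i x)" for x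
    unfolding Y_def using fin by (simp add: sum_distrib_left exp_sum mult.assoc)
  have indY: "indep_vars (\<lambda>_. borel) Y I"
    unfolding Y_def by (rule indep_vars_compose2[OF ind]) auto
  have intY: "integrable M (Y i)" "(\<integral>x. Y i x \<partial>M) \<le> exp ((s * a i)^2 * \<sigma>^2 / 2)" if "i \<in> I" for i
    using sg[OF that] unfolding sub_gaussian_def Y_def by blast+
  have "integrable M (\<lambda>x. \<Prod>i\<in>I. Y i x)"
    by (rule indep_vars_integrable[OF fin indY intY(1)])
  moreover have "(\<integral>x. (\<Prod>i\<in>I. Y i x) \<partial>M) = (\<Prod>i\<in>I. \<integral>x. Y i x \<partial>M)"
    by (rule indep_vars_lebesgue_integral[OF fin indY intY(1)])
  moreover have "(\<Prod>i\<in>I. \<integral>x. Y i x \<partial>M) \<le> (\<Prod>i\<in>I. exp ((s * a i)^2 * \<sigma>^2 / 2))"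
    by (intro prod_mono conjI intY(2) integral_nonneg_AE) (auto simp: Y_def)
  moreover have "(\<Prod>i\<in>I. exp ((s * a i)^2 * \<sigma>^2 / 2)) = exp (s^2 * \<sigma>^2 / 2 * (\<Sum>i\<in>I. (a i)^2))"
    using fin by (simp add: exp_sum[symmetric] sum_distrib_left power_mult_distrib mult_ac)
  moreover have "exp (s^2 * \<sigma>^2 / 2 * (\<Sum>i\<in>I. (a i)^2)) \<le> exp (s^2 * \<sigma>^2 / 2)"
    using a by (simp add: mult_left_le)
  ultimately show "integrable M (\<lambda>x. exp (s * (\<Sum>i\<in>I. a i * \<epsilon> i x))) \<and>
      (\<integral>x. exp (s * (\<Sum>i\<in>I. a i * \<epsilon> i x)) \<partial>M) \<le> exp (s^2 * \<sigma>^2 / 2)"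
    unfolding eq by (intro conjI; simp only:)
qed



definition coef :: "nat \<Rightarrow> nat \<Rightarrow> nat \<Rightarrow> real" where
  "coef n k i = (if k = 0 then 1 / sqrt (real n)
     else (if i \<le> 2^(k-1) then -1 else if i \<le> 2^k then 1 else 0) / sqrt (2^k))"

definition wt :: "nat \<Rightarrow> nat \<Rightarrow> real" where
  "wt n k = (if k = 0 then 1 / sqrt (real n) else - 1 / sqrt (2^k))"

definition cf :: "nat \<Rightarrow> nat \<Rightarrow> (nat \<Rightarrow> real) \<Rightarrow> real" where
  "cf n k y = (\<Sum>i=1..n. coef n k i * y i)"

definition row :: "nat \<Rightarrow> nat \<Rightarrow> nat" where
  "row m k = (if k = 0 then 0 else 2^(m-k+1) - 1)"

lemma floor_log2_eq:
  assumes "2^j \<le> i" "i < (2::nat)^(j+1)"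
  shows "nat \<lfloor>log 2 (real i)\<rfloor> = j"
proof -
  have "i > 0" using assms(1) by (metis le_0_eq not_gr_zero power_not_zero zero_neq_numeral)
  hence "\<lfloor>log (real 2) (real i)\<rfloor> = int j"
    using assms by (subst floor_log_nat_eq_powr_iff) auto
  thus ?thesis by simp
qed

lemma haar_zero:
  assumes n: "n = 2^m" and i: "i < n" and ni: "i \<notin> row m ` {0..m}"
  shows "haar n i (n-1) = 0"
proof -
  have i0: "i \<noteq> 0" using ni by (force simp: row_def)
  hence "i \<ge> 1" by simp
  define j where "j = nat \<lfloor>log 2 (real i)\<rfloor>"
  have "\<lfloor>log (real 2) (real i)\<rfloor> = \<lfloor>log 2 (real i)\<rfloor>" by simp
  hence ji: "2^j \<le> i \<and> i < 2^(j+1)"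
    using floor_log_nat_eq_powr_iff[of 2 i "nat \<lfloor>log 2 (real i)\<rfloor>"] i0
    by (simp add: j_def)
  have jm: "j < m"
  proof (rule ccontr)
    assume "\<not> j < m" hence "(2::nat)^m \<le> 2^j" by simp
    thus False using ji i n by linarith
  qed
  define P :: nat where "P = 2^j"
  define B :: nat where "B = 2^(m-j)"
  have nPB: "n = P * B" unfolding n P_def B_def using jm by (simp flip: power_add)
  have B2: "B \<ge> 2" unfolding B_def using jm power_increasing[of 1 "m-j" "2::nat"] by simp
  have bdef: "n div 2^j = B" using nPB P_def by simp
  define kk where "kk = i - 2^j"
  have kkP: "kk < P" using ji unfolding kk_def P_def by (simp add: less_diff_conv2)
  have kkne: "kk \<noteq> P - 1"
  proof
    assume "kk = P - 1"
    hence "i = 2^(j+1) - 1" using ji unfolding kk_def P_def by simp arith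
    moreover have "m - j \<in> {0..m}" by simp
    moreover have "row m (m - j) = 2^(j+1) - 1" using jm unfolding row_def
      by (simp add: Suc_diff_le)
    ultimately show False using ni by (metis image_eqI)
  qed
  hence "kk + 1 \<le> P - 1" using kkP by simp
  hence "(kk+1) * B \<le> (P - 1) * B" by (rule mult_right_mono) simp
  also have "\<dots> = n - B" using nPB by (simp add: diff_mult_distrib)
  finally have le: "(kk+1) * B \<le> n - B" .
  have "B div 2 \<le> B" by simp
  have c1: "\<not> (n - 1 < kk * B + B div 2)"
  proof -
    have "kk * B + B div 2 \<le> kk * B + B" by simp
    also have "\<dots> = (kk+1) * B" by simp
    finally show ?thesis using le B2 by linarith
  qed
  have c2: "\<not> (n - 1 < (kk + 1) * B)" using le B2 by linarith
  show ?thesis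
    unfolding haar_def Let_def j_def[symmetric] kk_def[symmetric] bdef using i0 c1 c2 by simp
qed

lemma haar_row:
  assumes n: "n = 2^m" and k: "k \<le> m" and q: "1 \<le> q" "q \<le> n"
  shows "haar n (row m k) (n - q) = coef n k q"
proof (cases "k = 0")
  case True thus ?thesis by (simp add: row_def haar_def coef_def)
next
  case False
  define j where "j = m - k"
  define i where "i = row m k"
  have idef: "i = 2^(j+1) - 1" using False k unfolding i_def row_def j_def by (simp add: Suc_diff_le)
  have "(2::nat)^(j+1) \<ge> 2" using power_increasing[of 1 "j+1" "2::nat"] by simp
  hence i0: "i \<noteq> 0" using idef by linarith
  have ji: "2^j \<le> i \<and> i < 2^(j+1)" using idef by simp
  have jeq: "nat \<lfloor>log 2 (real i)\<rfloor> = j" using floor_log2_eq ji by blast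
  define P :: nat where "P = 2^j"
  define B :: nat where "B = 2^k"
  define h :: nat where "h = 2^(k-1)"
  have Bh: "B = 2 * h" unfolding B_def h_def using False by (simp flip: power_Suc)
  have h1: "h \<ge> 1" unfolding h_def by simp
  have nPB: "n = P * B" unfolding n P_def B_def j_def using k by (simp flip: power_add)
  have bdef: "n div 2^j = B" using nPB P_def by simp
  have kkdef: "i - 2^j = P - 1" using idef unfolding P_def by simp
  have P1: "P \<ge> 1" unfolding P_def by simp
  have kkB: "(P - 1) * B = n - B" using nPB by (simp add: diff_mult_distrib)
  have kk1: "(P - 1 + 1) * B = n" using nPB P1 by simp
  have Bn: "B \<le> n" using nPB P1 by simp
  have hd: "B div 2 = h" using Bh by simp
  have sq: "sqrt (2^j / real n) = 1 / sqrt (2^k)"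
  proof -
    have "(2::real)^j / real n = 1 / 2^k" unfolding n j_def using k
      by (simp add: power_diff)
    thus ?thesis by (simp add: real_sqrt_divide)
  qed
  have c1: "(n - B \<le> n - q \<and> n - q < n - B + h) \<longleftrightarrow> (h < q \<and> q \<le> B)"
    using q Bn Bh by linarith
  have c2: "(n - B + h \<le> n - q \<and> n - q < n) \<longleftrightarrow> q \<le> h"
    using q Bn Bh by linarith
  have "haar n i (n - q) = (if h < q \<and> q \<le> B then 1 / sqrt (2^k) else if q \<le> h then - (1 / sqrt (2^k)) else 0)"
    unfolding haar_def Let_def jeq kkdef bdef kkB kk1 hd sq using i0 c1 c2 by simp
  also have "\<dots> = coef n k q"
    unfolding coef_def using False by (auto simp: B_def h_def)
  finally show ?thesis unfolding i_def .
qed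

lemma haar_row_last:
  assumes n: "n = 2^m" and k: "k \<le> m"
  shows "haar n (row m k) (n - 1) = wt n k"
  using haar_row[OF n k, of 1] n by (simp add: coef_def wt_def)

lemma sum_rev_idx:
  "(\<Sum>p<(n::nat). f (n - p) * g p) = (\<Sum>q=1..n. f q * (g (n - q) :: real))"
  by (rule sum.reindex_bij_witness[where i="\<lambda>q. n - q" and j="\<lambda>p. n - p"]) (auto simp: diff_diff_cancel)

lemma row_inj: "inj_on (row m) {0..m}"
proof (rule inj_onI)
  fix a b assume a: "a \<in> {0..m}" and b: "b \<in> {0..m}" and e: "row m a = row m b"
  have pw: "(2::nat)^(m-c+1) \<ge> 2" for c using power_increasing[of 1 "m-c+1" "2::nat"] by simp
  show "a = b"
  proof (cases "a = 0 \<or> b = 0")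
    case True
    have c2: "\<not> (2::nat) * 2^c \<le> Suc 0" for c
    proof -
      have "(1::nat) \<le> 2^c" by simp
      thus ?thesis by linarith
    qed
    with True show ?thesis using e unfolding row_def by (auto split: if_splits)
  next
    case False
    hence "(2::nat)^(m-a+1) - 1 = 2^(m-b+1) - 1" using e unfolding row_def by simp
    hence "(2::nat)^(m-a+1) = 2^(m-b+1)" using pw[of a] pw[of b] by linarith
    hence "m-a+1 = m-b+1" using power_inject_exp[of 2] by (metis one_less_numeral_iff semiring_norm(76))
    thus ?thesis using a b by simp
  qed
qed

lemma row_lt: assumes "n = 2^m" "k \<le> m" shows "row m k < n"
proof (cases "k = 0")
  case True thus ?thesis using assms by (simp add: row_def)
next
  case False
  have "(2::nat)^(m-k+1) \<le> 2^m" using False assms by (intro power_increasing) auto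
  moreover have "(2::nat)^(m-k+1) \<ge> 1" by simp
  moreover have "(2::nat)^m \<ge> 1" by simp
  moreover have "row m k = 2^(m-k+1) - 1" using False by (simp add: row_def)
  ultimately show ?thesis using assms by linarith
qed

lemma alg1_haar:
  assumes n: "n = 2^m"
  shows "alg1 n (haar n) lam y = (\<Sum>k=0..m. wt n k * soft_thresh lam (cf n k y))"
proof -
  have bt: "(\<Sum>p<n. haar n i p * y (n - p)) = (\<Sum>q=1..n. haar n i (n - q) * y q)" for i
    using sum_rev_idx[of "\<lambda>q. y q" n "haar n i"] by (simp add: mult.commute)
  have "alg1 n (haar n) lam y = (\<Sum>i<n. haar n i (n - 1) * soft_thresh lam (\<Sum>q=1..n. haar n i (n - q) * y q))"
    unfolding alg1_def Let_def bt ..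
  also have "\<dots> = (\<Sum>i\<in>row m ` {0..m}. haar n i (n - 1) * soft_thresh lam (\<Sum>q=1..n. haar n i (n - q) * y q))"
    using haar_zero[OF n] row_lt[OF n]
    by (intro sum.mono_neutral_right) auto
  also have "\<dots> = (\<Sum>k=0..m. haar n (row m k) (n - 1) * soft_thresh lam (\<Sum>q=1..n. haar n (row m k) (n - q) * y q))"
    by (rule sum.reindex[OF row_inj, unfolded comp_def])
  also have "\<dots> = (\<Sum>k=0..m. wt n k * soft_thresh lam (cf n k y))"
    unfolding cf_def using haar_row[OF n] haar_row_last[OF n]
    by (intro sum.cong refl) (simp)
  finally show ?thesis .
qed



definition Tsum :: "(nat \<Rightarrow> real) \<Rightarrow> nat \<Rightarrow> real" where
  "Tsum y t = (\<Sum>i=1..t. y i)"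

lemma cf_pos:
  assumes n: "n = 2^m" and k: "1 \<le> k" "k \<le> m"
  shows "cf n k y = (Tsum y (2^k) - 2 * Tsum y (2^(k-1))) / sqrt (2^k)"
proof -
  define h :: nat where "h = 2^(k-1)"
  define B :: nat where "B = 2^k"
  have Bh: "B = h + h" unfolding B_def h_def using k by (cases k) simp_all
  have Bn: "B \<le> n" unfolding B_def n using k by (intro power_increasing) auto
  define g where "g i = (if i \<le> h then - y i else if i \<le> B then y i else 0)" for i
  have "cf n k y = (\<Sum>i=1..n. g i) / sqrt (2^k)"
    unfolding cf_def coef_def g_def h_def B_def using k
    by (simp add: sum_divide_distrib[symmetric]) (intro sum.cong refl, auto)
  also have "(\<Sum>i=1..n. g i) = (\<Sum>i=1..B. g i)"
    using Bn Bh by (intro sum.mono_neutral_right) (auto simp: g_def)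
  also have "\<dots> = (\<Sum>i=1..h. g i) + (\<Sum>i=h+1..h+h. g i)"
    unfolding Bh by (rule sum.ub_add_nat) simp
  also have "(\<Sum>i=1..h. g i) = - Tsum y h"
    unfolding Tsum_def g_def by (simp add: sum_negf[symmetric])
  also have "(\<Sum>i=h+1..h+h. g i) = (\<Sum>i=h+1..h+h. y i)"
    unfolding g_def Bh by (intro sum.cong refl) auto
  also have "Tsum y B = Tsum y h + (\<Sum>i=h+1..h+h. y i)"
    unfolding Tsum_def Bh by (rule sum.ub_add_nat) simp
  hence "(\<Sum>i=h+1..h+h. y i) = Tsum y B - Tsum y h" by simp
  finally show ?thesis unfolding B_def h_def by simp
qed

lemma cf_zero: "cf n 0 y = Tsum y n / sqrt (real n)"
  unfolding cf_def coef_def Tsum_def by (simp add: sum_divide_distrib)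

lemma wt_cf_pos:
  assumes n: "n = 2^m" and k: "1 \<le> k" "k \<le> m"
  shows "wt n k * cf n k y = - (Tsum y (2^k) / 2^k - Tsum y (2^(k-1)) / 2^(k-1))"
proof -
  have "sqrt ((2::real)^k) * sqrt (2^k) = 2^k" by simp
  moreover have "(2::real)^k = 2 * 2^(k-1)" using k by (cases k) simp_all
  ultimately show ?thesis
    unfolding cf_pos[OF assms] wt_def using k by (simp add: field_simps)
qed

lemma recon:
  assumes n: "n = 2^m"
  shows "(\<Sum>k=0..m. wt n k * cf n k y) = y 1"
proof -
  define D where "D k = Tsum y (2^k) / 2^k" for k
  have tele: "(\<Sum>k=1..j. D k - D (k-1)) = D j - D 0" for j
    by (induction j) (auto simp: sum.atLeast1_atMost_eq)
  have "(\<Sum>k=0..m. wt n k * cf n k y) = wt n 0 * cf n 0 y + (\<Sum>k=1..m. wt n k * cf n k y)"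
    by (simp add: sum.atLeast_Suc_atMost)
  also have "wt n 0 * cf n 0 y = D m"
    unfolding wt_def cf_zero D_def n by (simp add: field_simps)
  also have "(\<Sum>k=1..m. wt n k * cf n k y) = (\<Sum>k=1..m. - (D k - D (k-1)))"
    by (intro sum.cong refl) (simp add: wt_cf_pos[OF n] D_def)
  also have "\<dots> = - (D m - D 0)"
  proof -
    have "(\<Sum>k=1..m. - (D k - D (k-1))) = - (\<Sum>k=1..m. D k - D (k-1))" by (rule sum_negf)
    thus ?thesis using tele[of m] by linarith
  qed
  finally show ?thesis by (simp add: D_def Tsum_def)
qed

lemma cf_add: "cf n k (\<lambda>i. a i + b i) = cf n k a + cf n k b"
  unfolding cf_def by (simp add: distrib_left sum.distrib)

lemma coef_sq:
  assumes n: "n = 2^m" and k: "k \<le> m"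
  shows "(\<Sum>i=1..n. (coef n k i)^2) = 1"
proof (cases "k = 0")
  case True
  have "n > 0" using n by simp
  thus ?thesis using True unfolding coef_def by (simp add: power_divide)
next
  case False
  define h :: nat where "h = 2^(k-1)"
  define B :: nat where "B = 2^k"
  have Bn: "B \<le> n" unfolding B_def n using k by (intro power_increasing) auto
  have pk: "(2::nat)^(k - Suc 0) \<le> 2^k" by (rule power_increasing) auto
  have "(\<Sum>i=1..n. (coef n k i)^2) = (\<Sum>i=1..B. (coef n k i)^2)"
    using Bn False pk
    by (intro sum.mono_neutral_right) (auto simp: coef_def B_def dest: order_trans[OF _ pk])
  also have "\<dots> = (\<Sum>i=1..B. 1 / 2^k)"
    using False by (intro sum.cong refl) (auto simp: coef_def B_def power_divide)
  also have "\<dots> = 1" by (simp add: B_def)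
  finally show ?thesis .
qed

lemma cf_run_mean:
  assumes n: "n = 2^m" and k: "1 \<le> k" "k \<le> m"
  shows "cf n k y = sqrt (2^k) * (run_mean y (2^k) - run_mean y (2^(k-1)))"
proof -
  have s: "sqrt ((2::real)^k) * sqrt (2^k) = 2^k" by simp
  have t: "(2::real)^k = 2 * 2^(k-1)" using k by (cases k) simp_all
  have "cf n k y = (Tsum y (2^k) - 2 * Tsum y (2^(k-1))) / sqrt (2^k)" by (rule cf_pos[OF assms])
  also have "\<dots> = sqrt (2^k) * (Tsum y (2^k) / 2^k - Tsum y (2^(k-1)) / 2^(k-1))"
    using s t by (simp add: field_simps)
  finally show ?thesis unfolding run_mean_def Tsum_def by simp
qed



lemma soft_diff: "\<bar>soft_thresh lam x - x\<bar> \<le> \<bar>lam\<bar>"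
  unfolding soft_thresh_def
  by (cases "x > 0"; cases "x < 0") (auto simp: max_def)

lemma soft_zero: "lam \<ge> 0 \<Longrightarrow> \<bar>x\<bar> \<le> lam \<Longrightarrow> soft_thresh lam x = 0"
  unfolding soft_thresh_def by (auto simp: max_def)

lemma soft_max:
  assumes "lam \<ge> 0"
  shows "\<bar>soft_thresh lam (s + z) - s\<bar> \<le> max \<bar>s\<bar> \<bar>z\<bar>"
proof (cases "\<bar>s + z\<bar> \<le> lam")
  case True thus ?thesis using soft_zero[OF assms True] by simp
next
  case False
  show ?thesis
  proof (cases "s + z > 0")
    case True
    hence "soft_thresh lam (s + z) = s + z - lam" using False unfolding soft_thresh_def by (auto simp: max_def)
    thus ?thesis using False True assms by (smt (verit))
  next
    case nz: False
    hence "soft_thresh lam (s + z) = s + z + lam" using False assms unfolding soft_thresh_def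
      by (cases "s + z = 0") (auto simp: max_def)
    thus ?thesis using False nz assms by (smt (verit))
  qed
qed

lemma abs_wt: "n > 0 \<Longrightarrow> \<bar>wt n k\<bar> = 1 / sqrt (if k = 0 then real n else 2^k)"
  unfolding wt_def by auto

lemma err_pt:
  assumes n: "n = 2^m"
  shows "alg1 n (haar n) lam (\<lambda>i. \<theta> i + e i) - \<theta> 1
       = (\<Sum>k=0..m. wt n k * (soft_thresh lam (cf n k \<theta> + cf n k e) - cf n k \<theta>))"
  unfolding alg1_haar[OF n] recon[OF n, of \<theta>, symmetric] cf_add
  by (simp add: sum_subtractf[symmetric] right_diff_distrib)

lemma err_crude:
  assumes n: "n = 2^m"
  shows "\<bar>alg1 n (haar n) lam (\<lambda>i. \<theta> i + e i) - \<theta> 1\<bar>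
       \<le> \<bar>e 1\<bar> + \<bar>lam\<bar> * (\<Sum>k=0..m. \<bar>wt n k\<bar>)"
proof -
  let ?y = "\<lambda>i. \<theta> i + e i"
  have "alg1 n (haar n) lam ?y - \<theta> 1 = e 1 + (\<Sum>k=0..m. wt n k * (soft_thresh lam (cf n k ?y) - cf n k ?y))"
    unfolding alg1_haar[OF n] using recon[OF n, of ?y]
    by (simp add: sum_subtractf right_diff_distrib)
  also have "\<bar>\<dots>\<bar> \<le> \<bar>e 1\<bar> + \<bar>\<Sum>k=0..m. wt n k * (soft_thresh lam (cf n k ?y) - cf n k ?y)\<bar>"
    by (rule abs_triangle_ineq)
  also have "\<bar>\<Sum>k=0..m. wt n k * (soft_thresh lam (cf n k ?y) - cf n k ?y)\<bar> \<le> (\<Sum>k=0..m. \<bar>wt n k\<bar> * \<bar>lam\<bar>)"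
    by (rule order_trans[OF sum_abs]) (auto intro!: sum_mono mult_left_mono simp: abs_mult soft_diff)
  finally show ?thesis by (simp add: sum_distrib_left mult.commute)
qed

lemma S_set_fin: "finite (S_set r)"
proof -
  have "S_set r = (\<lambda>k. 2^k) ` {..nat \<lfloor>log 2 (real r)\<rfloor>}" unfolding S_set_def by auto
  thus ?thesis by simp
qed

lemma U_ge_sig: "\<sigma> / sqrt (real r) \<le> U_fun \<sigma> \<theta> r"
  unfolding U_fun_def by simp

lemma U_ge_mean:
  assumes "2^j \<le> r"
  shows "\<bar>run_mean \<theta> (2^j) - \<theta> 1\<bar> \<le> U_fun \<sigma> \<theta> r"
proof -
  have "(1::nat) \<le> 2^j" by simp
  hence "r \<ge> 1" using assms by linarith
  hence r0: "real r > 0" by simp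
  have "real j \<le> log 2 (real r)"
  proof -
    have "real (2^j) \<le> real r" using assms by (simp only: of_nat_le_iff)
    hence "(2::real)^j \<le> real r" by simp
    thus ?thesis by (rule le_log_of_power) simp
  qed
  hence "int j \<le> \<lfloor>log 2 (real r)\<rfloor>" by (simp add: le_floor_iff)
  hence "j \<le> nat \<lfloor>log 2 (real r)\<rfloor>" by linarith
  hence "2^j \<in> S_set r" unfolding S_set_def by auto
  hence "\<bar>run_mean \<theta> (2^j) - \<theta> 1\<bar> \<le> Max ((\<lambda>t. \<bar>run_mean \<theta> t - \<theta> 1\<bar>) ` S_set r)"
    using S_set_fin by (intro Max_ge) auto
  thus ?thesis unfolding U_fun_def by linarith
qed

lemma rstar_in:
  assumes "n \<ge> 1"
  shows "r_star n \<sigma> \<theta> \<in> {1..n}"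
proof -
  have "Min (U_fun \<sigma> \<theta> ` {1..n}) \<in> U_fun \<sigma> \<theta> ` {1..n}"
    using assms by (intro Min_in) auto
  then obtain r where "r \<in> {1..n}" "U_fun \<sigma> \<theta> r = Min (U_fun \<sigma> \<theta> ` {1..n})" by auto
  hence "\<exists>r. r \<in> {1..n} \<and> U_fun \<sigma> \<theta> r = Min (U_fun \<sigma> \<theta> ` {1..n})" by blast
  from LeastI_ex[OF this] show ?thesis unfolding r_star_def by blast
qed



lemma pt_bound:
  fixes \<sigma> L lam s z b U :: real
  assumes sig: "\<sigma> > 0" and L: "L \<ge> 3/2" and lam: "lam = 2 * \<sigma> * L" and z: "\<bar>z\<bar> \<le> 3/2 * \<sigma> * L"
    and b: "b > 0"
    and fc: "\<bar>s\<bar> \<le> 2 * sqrt b * U \<or> \<sigma> / sqrt b \<le> U"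
  shows "\<bar>soft_thresh lam (s + z) - s\<bar> / sqrt b \<le> 4 * L * U"
  using fc
proof
  assume fine: "\<bar>s\<bar> \<le> 2 * sqrt b * U"
  have sb: "sqrt b > 0" using b by simp
  have "0 \<le> 2 * sqrt b * U" using fine by linarith
  hence U0: "U \<ge> 0" using sb by (simp add: zero_le_mult_iff)
  have sbU: "sqrt b * U \<ge> 0" using U0 sb by simp
  have lam0: "lam \<ge> 0" using lam sig L by simp
  have "\<bar>soft_thresh lam (s + z) - s\<bar> \<le> 6 * sqrt b * U"
  proof (cases "\<bar>s + z\<bar> \<le> lam")
    case True
    thus ?thesis using soft_zero[OF lam0 True] fine sbU by simp
  next
    case False
    have m: "\<bar>soft_thresh lam (s + z) - s\<bar> \<le> max \<bar>s\<bar> \<bar>z\<bar>" by (rule soft_max[OF lam0])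
    show ?thesis
    proof (cases "\<bar>z\<bar> \<le> \<bar>s\<bar>")
      case True thus ?thesis using m fine sbU by simp
    next
      case zs: False
      have "\<bar>s\<bar> \<ge> \<bar>s + z\<bar> - \<bar>z\<bar>" by simp
      hence "\<bar>s\<bar> > 2 * \<sigma> * L - 3/2 * \<sigma> * L" using False z lam by linarith
      hence "3 * \<bar>s\<bar> > 3/2 * \<sigma> * L" by linarith
      hence "\<bar>z\<bar> < 3 * \<bar>s\<bar>" using z by linarith
      thus ?thesis using m zs fine by linarith
    qed
  qed
  hence "\<bar>soft_thresh lam (s + z) - s\<bar> / sqrt b \<le> 6 * U" using sb by (simp add: divide_le_eq mult.commute mult.left_commute)
  also have "6 * U \<le> 4 * L * U" using L U0 by (intro mult_right_mono) auto
  finally show ?thesis .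
next
  assume coarse: "\<sigma> / sqrt b \<le> U"
  have sb: "sqrt b > 0" using b by simp
  have "\<bar>soft_thresh lam (s + z) - s\<bar> \<le> \<bar>soft_thresh lam (s + z) - (s + z)\<bar> + \<bar>z\<bar>" by linarith
  also have "\<dots> \<le> \<bar>lam\<bar> + \<bar>z\<bar>" using soft_diff by (intro add_mono) auto
  also have "\<dots> \<le> 4 * L * \<sigma>"
  proof -
    have "\<bar>lam\<bar> = 2 * \<sigma> * L" using lam sig L by simp
    thus ?thesis using z by (simp add: mult.commute mult.left_commute)
  qed
  finally have "\<bar>soft_thresh lam (s + z) - s\<bar> / sqrt b \<le> 4 * L * (\<sigma> / sqrt b)"
    using sb by (simp add: divide_right_mono)
  also have "\<dots> \<le> 4 * L * U" using coarse L by (intro mult_left_mono) auto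
  finally show ?thesis .
qed



lemma soft_meas [measurable]: "soft_thresh lam \<in> borel_measurable borel"
  unfolding soft_thresh_def[abs_def] by measurable

lemma cf_meas:
  assumes rv: "\<And>i. i \<in> {1..n} \<Longrightarrow> \<epsilon> i \<in> borel_measurable M"
  shows "(\<lambda>x. cf n k (\<lambda>i. f i + \<epsilon> i x)) \<in> borel_measurable M"
  unfolding cf_def by (intro borel_measurable_sum borel_measurable_times borel_measurable_add) (auto intro: rv)

lemma alg1_meas:
  assumes n: "n = 2^m" and rv: "\<And>i. i \<in> {1..n} \<Longrightarrow> \<epsilon> i \<in> borel_measurable M"
  shows "(\<lambda>x. alg1 n (haar n) lam (\<lambda>i. f i + \<epsilon> i x)) \<in> borel_measurable M"
  unfolding alg1_haar[OF n]
  by (intro borel_measurable_sum borel_measurable_times borel_measurable_const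
        measurable_compose[OF cf_meas[OF rv] soft_meas])

lemma bad_crude:
  fixes thr lam K U \<delta> \<sigma> :: real and m n :: nat
  assumes P: "prob_space M" and n: "n = 2^m"
    and rv1: "\<epsilon> 1 \<in> borel_measurable M" and sg1: "sub_gaussian M \<sigma> (\<epsilon> 1)" and sig: "\<sigma> > 0"
    and thr: "thr \<ge> 0" "K * U - \<bar>lam\<bar> * (\<Sum>k=0..m. \<bar>wt n k\<bar>) \<ge> thr"
    and tl: "2 * exp (- (thr^2) / (2 * \<sigma>^2)) \<le> \<delta>"
  shows "measure M {x\<in>space M. \<not> \<bar>alg1 n (haar n) lam (\<lambda>i. \<theta> i + \<epsilon> i x) - \<theta> 1\<bar> \<le> K * U} \<le> \<delta>"
proof -
  interpret prob_space M by (rule P)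
  have "{x\<in>space M. \<not> \<bar>alg1 n (haar n) lam (\<lambda>i. \<theta> i + \<epsilon> i x) - \<theta> 1\<bar> \<le> K * U}
        \<subseteq> {x\<in>space M. \<bar>\<epsilon> 1 x\<bar> > thr}"
  proof safe
    fix x assume x: "x \<in> space M" and nb: "\<not> \<bar>alg1 n (haar n) lam (\<lambda>i. \<theta> i + \<epsilon> i x) - \<theta> 1\<bar> \<le> K * U"
    have "\<bar>alg1 n (haar n) lam (\<lambda>i. \<theta> i + \<epsilon> i x) - \<theta> 1\<bar> \<le> \<bar>\<epsilon> 1 x\<bar> + \<bar>lam\<bar> * (\<Sum>k=0..m. \<bar>wt n k\<bar>)"
      by (rule err_crude[OF n])
    thus "thr < \<bar>\<epsilon> 1 x\<bar>" using nb thr by linarith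
  qed
  hence "measure M {x\<in>space M. \<not> \<bar>alg1 n (haar n) lam (\<lambda>i. \<theta> i + \<epsilon> i x) - \<theta> 1\<bar> \<le> K * U}
        \<le> measure M {x\<in>space M. \<bar>\<epsilon> 1 x\<bar> > thr}"
    using rv1 by (intro finite_measure_mono) auto
  also have "\<dots> \<le> 2 * exp (- (thr^2) / (2 * \<sigma>^2))"
    by (rule subg_tail[OF P rv1 sg1 sig thr(1)])
  finally show ?thesis using tl by linarith
qed

lemma bad_pt:
  fixes L lam K U \<delta> \<sigma> :: real and m n r :: nat
  assumes P: "prob_space M" and n: "n = 2^m"
    and rv: "\<And>i. i \<in> {1..n} \<Longrightarrow> \<epsilon> i \<in> borel_measurable M"
    and indep: "prob_space.indep_vars M (\<lambda>_. borel) \<epsilon> {1..n}"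
    and subg: "\<And>i. i \<in> {1..n} \<Longrightarrow> sub_gaussian M \<sigma> (\<epsilon> i)"
    and sig: "\<sigma> > 0" and L: "L \<ge> 3/2" and lam: "lam = 2 * \<sigma> * L"
    and r: "r \<in> {1..n}" and U: "U = U_fun \<sigma> \<theta> r"
    and K: "4 * L * (m + 1) \<le> K"
    and tl: "2 * (m + 1) * exp (- (9/8) * L^2) \<le> \<delta>"
  shows "measure M {x\<in>space M. \<not> \<bar>alg1 n (haar n) lam (\<lambda>i. \<theta> i + \<epsilon> i x) - \<theta> 1\<bar> \<le> K * U} \<le> \<delta>"
proof -
  interpret prob_space M by (rule P)
  define t where "t = 3/2 * \<sigma> * L"
  have t0: "t \<ge> 0" using sig L by (simp add: t_def)
  define Z where "Z k x = cf n k (\<lambda>i. \<epsilon> i x)" for k x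
  have npos: "n > 0" using n by simp
  have rn: "1 \<le> r" "r \<le> n" using r by auto
  have sigU: "\<sigma> / sqrt b \<le> U" if "real r \<le> b" for b
  proof -
    have "\<sigma> / sqrt b \<le> \<sigma> / sqrt (real r)"
      using that sig rn by (intro divide_left_mono) auto
    thus ?thesis using U_ge_sig[of \<sigma> r \<theta>] U by linarith
  qed
  have U0: "U \<ge> 0"
  proof -
    have "0 \<le> \<sigma> / sqrt (real r)" using sig by simp
    thus ?thesis using U_ge_sig[of \<sigma> r \<theta>] U by linarith
  qed
  have trm: "\<bar>wt n k * (soft_thresh lam (cf n k \<theta> + Z k x) - cf n k \<theta>)\<bar> \<le> 4 * L * U"
    if k: "k \<le> m" and z: "\<bar>Z k x\<bar> \<le> t" for k x
  proof -
    define b :: real where "b = (if k = 0 then real n else 2^k)"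
    have b0: "b > 0" by (simp add: b_def npos)
    have aw: "\<bar>wt n k\<bar> = 1 / sqrt b" unfolding b_def by (rule abs_wt[OF npos])
    have fc: "\<bar>cf n k \<theta>\<bar> \<le> 2 * sqrt b * U \<or> \<sigma> / sqrt b \<le> U"
    proof (cases "k = 0")
      case True thus ?thesis using sigU[of b] rn by (simp add: b_def)
    next
      case False
      show ?thesis
      proof (cases "2^k \<le> r")
        case True
        have k1: "1 \<le> k" using False by simp
        have e: "cf n k \<theta> = sqrt (2^k) * (run_mean \<theta> (2^k) - run_mean \<theta> (2^(k-1)))"
          by (rule cf_run_mean[OF n k1 k])
        have "(2::nat)^(k-1) \<le> 2^k" by (rule power_increasing) auto
        hence h2: "2^(k-1) \<le> r" using True by linarith
        have "\<bar>run_mean \<theta> (2^k) - run_mean \<theta> (2^(k-1))\<bar> \<le> 2 * U"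
          using U_ge_mean[OF True, of \<theta> \<sigma>] U_ge_mean[OF h2, of \<theta> \<sigma>] U by linarith
        hence "\<bar>cf n k \<theta>\<bar> \<le> sqrt (2^k) * (2 * U)" unfolding e abs_mult
          by (simp add: mult_left_mono)
        thus ?thesis using False by (simp add: b_def)
      next
        case nt: False
        have "real r \<le> b" using nt False by (simp add: b_def)
        thus ?thesis using sigU by blast
      qed
    qed
    have "\<bar>soft_thresh lam (cf n k \<theta> + Z k x) - cf n k \<theta>\<bar> / sqrt b \<le> 4 * L * U"
      by (rule pt_bound[OF sig L lam _ b0 fc]) (use z in \<open>simp add: t_def\<close>)
    thus ?thesis unfolding abs_mult aw by simp
  qed
  have sub: "{x\<in>space M. \<not> \<bar>alg1 n (haar n) lam (\<lambda>i. \<theta> i + \<epsilon> i x) - \<theta> 1\<bar> \<le> K * U}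
        \<subseteq> (\<Union>k\<in>{0..m}. {x\<in>space M. \<bar>Z k x\<bar> > t})"
  proof
    fix x assume "x \<in> {x\<in>space M. \<not> \<bar>alg1 n (haar n) lam (\<lambda>i. \<theta> i + \<epsilon> i x) - \<theta> 1\<bar> \<le> K * U}"
    hence x: "x \<in> space M" and nb: "\<not> \<bar>alg1 n (haar n) lam (\<lambda>i. \<theta> i + \<epsilon> i x) - \<theta> 1\<bar> \<le> K * U" by auto
    have "\<exists>k\<in>{0..m}. \<bar>Z k x\<bar> > t"
    proof (rule ccontr)
      assume "\<not> (\<exists>k\<in>{0..m}. \<bar>Z k x\<bar> > t)"
      hence zs: "\<And>k. k \<le> m \<Longrightarrow> \<bar>Z k x\<bar> \<le> t" by (force simp: not_less)
      have "\<bar>alg1 n (haar n) lam (\<lambda>i. \<theta> i + \<epsilon> i x) - \<theta> 1\<bar>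
          = \<bar>\<Sum>k=0..m. wt n k * (soft_thresh lam (cf n k \<theta> + Z k x) - cf n k \<theta>)\<bar>"
        unfolding Z_def using err_pt[OF n, of lam \<theta> "\<lambda>i. \<epsilon> i x"] by simp
      also have "\<dots> \<le> (\<Sum>k=0..m. \<bar>wt n k * (soft_thresh lam (cf n k \<theta> + Z k x) - cf n k \<theta>)\<bar>)"
        by (rule sum_abs)
      also have "\<dots> \<le> (\<Sum>k=0..m. 4 * L * U)"
        by (intro sum_mono trm zs) auto
      also have "\<dots> = 4 * L * (m + 1) * U" by simp
      also have "\<dots> \<le> K * U" using K U0 by (intro mult_right_mono) auto
      finally show False using nb by linarith
    qed
    thus "x \<in> (\<Union>k\<in>{0..m}. {x\<in>space M. \<bar>Z k x\<bar> > t})" using x by auto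
  qed
  have Zm: "(\<lambda>x. Z k x) \<in> borel_measurable M" for k
    using cf_meas[OF rv, where k=k and f="\<lambda>_. 0"] unfolding Z_def by simp
  have "measure M {x\<in>space M. \<not> \<bar>alg1 n (haar n) lam (\<lambda>i. \<theta> i + \<epsilon> i x) - \<theta> 1\<bar> \<le> K * U}
        \<le> measure M (\<Union>k\<in>{0..m}. {x\<in>space M. \<bar>Z k x\<bar> > t})"
    using sub Zm by (intro finite_measure_mono) auto
  also have "\<dots> \<le> (\<Sum>k\<in>{0..m}. measure M {x\<in>space M. \<bar>Z k x\<bar> > t})"
    using Zm by (intro finite_measure_subadditive_finite) auto
  also have "\<dots> \<le> (\<Sum>k\<in>{0..m}. 2 * exp (- (t^2) / (2 * \<sigma>^2)))"
  proof (intro sum_mono)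
    fix k assume k: "k \<in> {0..m}"
    have sgk: "sub_gaussian M \<sigma> (\<lambda>x. \<Sum>i\<in>{1..n}. coef n k i * \<epsilon> i x)"
      by (rule subg_lin[OF P _ indep rv subg]) (use coef_sq[OF n, of k] k in auto)
    have "(\<lambda>x. Z k x) = (\<lambda>x. \<Sum>i\<in>{1..n}. coef n k i * \<epsilon> i x)" unfolding Z_def cf_def ..
    thus "measure M {x\<in>space M. \<bar>Z k x\<bar> > t} \<le> 2 * exp (- (t^2) / (2 * \<sigma>^2))"
      using subg_tail[OF P _ sgk sig t0] Zm[of k] by simp
  qed
  also have "\<dots> = 2 * (m + 1) * exp (- (9/8) * L^2)"
  proof -
    have e: "- (t^2) / (2 * \<sigma>^2) = - (9/8) * L^2" using sig by (simp add: t_def field_simps power2_eq_square)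
    show ?thesis unfolding e by simp
  qed
  finally show ?thesis using tl by linarith
qed



lemma exp_double_lower:
  fixes y :: real assumes "y \<ge> 0"
  shows "(1 + y + y^2/2)^2 \<le> exp (2 * y)"
proof -
  have "exp (2 * y) = exp y ^ 2" by (simp add: exp_double[symmetric] power2_eq_square exp_add[symmetric])
  moreover have "1 + y + y^2/2 \<le> exp y" by (rule exp_lower_Taylor_quadratic[OF assms])
  moreover have "0 \<le> 1 + y + y^2/2" using assms by simp
  ultimately show ?thesis by (simp add: power_mono)
qed

lemma sqrt2_bounds: "1.4142 \<le> sqrt (2::real)" "sqrt (2::real) \<le> 1.4143"
proof -
  show "1.4142 \<le> sqrt (2::real)" by (rule real_le_rsqrt) (simp add: power2_eq_square)
  have "sqrt (2::real) \<le> sqrt (1.4143^2)" by (subst real_sqrt_le_iff) (simp add: power2_eq_square)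
  thus "sqrt (2::real) \<le> 1.4143" by simp
qed

lemma sqrt_sq_le: fixes u c :: real assumes "u \<le> c^2" "c \<ge> 0" shows "sqrt u \<le> c"
proof -
  have "sqrt u \<le> sqrt (c^2)" using assms(1) by (simp only: real_sqrt_le_iff)
  thus ?thesis using assms(2) by simp
qed



lemma s4: "sqrt (4::real) = 2" by (metis real_sqrt_abs abs_numeral power2_eq_square numeral_Bit0 numeral_times_numeral mult_2 semiring_norm(2))
lemma s8: "sqrt (8::real) = 2 * sqrt 2"
proof -
  have "sqrt (8::real) = sqrt (4 * 2)" by simp
  also have "\<dots> = sqrt 4 * sqrt 2" by (rule real_sqrt_mult)
  finally show ?thesis by (simp add: s4)
qed
lemma s16: "sqrt (16::real) = 4"
proof -
  have "sqrt (16::real) = sqrt (4^2)" by simp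
  thus ?thesis by simp
qed

lemma SW1: "(\<Sum>k=0..1. \<bar>wt 2 k\<bar>) = 2 / sqrt 2"
  by (simp add: wt_def)
lemma SW2: "(\<Sum>k=0..2. \<bar>wt 4 k\<bar>) = 1 + 1 / sqrt 2"
  by (simp add: wt_def numeral_2_eq_2 s4)
lemma SW3: "(\<Sum>k=0..3. \<bar>wt 8 k\<bar>) = 1/2 + 2 / sqrt 2"
  by (simp add: wt_def numeral_3_eq_3 s4 s8)
lemma SW4: "(\<Sum>k=0..4. \<bar>wt 16 k\<bar>) = 1 + 3 / (2 * sqrt 2)"
  by (simp add: wt_def eval_nat_numeral s4 s8 s16)



theorem theorem1:
  fixes M :: "'a measure" and m :: nat and n :: nat and \<delta> \<sigma> :: real
    and \<theta> :: "nat \<Rightarrow> real" and \<epsilon> :: "nat \<Rightarrow> 'a \<Rightarrow> real"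
  assumes "prob_space M"
    and n_def: "n = 2 ^ m" and "m \<ge> 1"
    and "0 < \<delta>" "\<delta> < 1"
    and "0 < \<sigma>"
    and rv: "\<And>i. i \<in> {1..n} \<Longrightarrow> \<epsilon> i \<in> borel_measurable M"
    and indep: "prob_space.indep_vars M (\<lambda>_. borel) \<epsilon> {1..n}"
    and ident: "\<And>i j. i \<in> {1..n} \<Longrightarrow> j \<in> {1..n} \<Longrightarrow> distr M borel (\<epsilon> i) = distr M borel (\<epsilon> j)"
    and mean0: "\<And>i. i \<in> {1..n} \<Longrightarrow> integrable M (\<epsilon> i) \<and> (\<integral>x. \<epsilon> i x \<partial>M) = 0"
    and subg: "\<And>i. i \<in> {1..n} \<Longrightarrow> sub_gaussian M \<sigma> (\<epsilon> i)"
  shows "measure M {x \<in> space M.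
           \<bar>alg1 n (haar n) (2 * \<sigma> * sqrt (2 * ln (ln (real n) / \<delta>))) (\<lambda>i. \<theta> i + \<epsilon> i x) - \<theta> 1\<bar>
             \<le> (max (4 * sqrt (2 * ln (ln (real n) / \<delta>))) (2 * sqrt 2) * (log 2 (real n) + 1))
                 * U_fun \<sigma> \<theta> (r_star n \<sigma> \<theta>)}
         \<ge> 1 - \<delta>"
proof -
  note P = assms(1)
  interpret prob_space M by (rule P)
  have m1: "m \<ge> 1" and d0: "0 < \<delta>" and d1: "\<delta> < 1" and sig: "0 < \<sigma>" using assms by auto
  have "(2::nat)^1 \<le> 2^m" using m1 by (intro power_increasing) auto
  hence n2: "n \<ge> 2" using n_def by simp
  have lnn: "ln (real n) = real m * ln 2" using n_def by (simp add: ln_realpow)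
  have ln2: "2/3 \<le> ln (2::real)" by (rule ln2_ge_two_thirds)
  have lnnpos: "ln (real n) > 0" using n2 by simp
  define A where "A = ln (ln (real n) / \<delta>)"
  have expA: "exp A = ln (real n) / \<delta>" unfolding A_def using lnnpos d0 by simp
  have dA: "\<delta> = real m * ln 2 * exp (- A)"
    using expA lnn d0 lnnpos by (simp add: exp_minus field_simps)
  have expA_gt: "exp A > real m * ln 2"
  proof -
    have "ln (real n) / \<delta> > ln (real n)" using lnnpos d0 d1 by (simp add: less_divide_eq)
    thus ?thesis using expA lnn by simp
  qed
  define L where "L = sqrt (2 * A)"
  define lam where "lam = 2 * \<sigma> * L"
  define K where "K = max (4 * L) (2 * sqrt 2) * (log 2 (real n) + 1)"
  have logn: "log 2 (real n) = real m" using n_def by (simp add: log_nat_power)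
  have K4L: "4 * L * (m + 1) \<le> K"
  proof -
    have "4 * L * (real m + 1) \<le> max (4 * L) (2 * sqrt 2) * (real m + 1)"
      by (rule mult_right_mono) auto
    thus ?thesis unfolding K_def logn by (simp only: of_nat_add of_nat_1)
  qed
  have K2: "2 * sqrt 2 * (m + 1) \<le> K"
  proof -
    have "2 * sqrt 2 * (real m + 1) \<le> max (4 * L) (2 * sqrt 2) * (real m + 1)"
      by (rule mult_right_mono) auto
    thus ?thesis unfolding K_def logn by (simp only: of_nat_add of_nat_1)
  qed
  have K0: "K \<ge> 0" using K2 by (smt (verit) of_nat_0_le_iff real_sqrt_ge_zero zero_le_mult_iff)
  define r where "r = r_star n \<sigma> \<theta>"
  define U where "U = U_fun \<sigma> \<theta> r"
  have r: "r \<in> {1..n}" unfolding r_def using n2 by (intro rstar_in) auto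
  have Un: "\<sigma> / sqrt (real n) \<le> U"
  proof -
    have "\<sigma> / sqrt (real n) \<le> \<sigma> / sqrt (real r)" using r sig by (intro divide_left_mono) auto
    thus ?thesis using U_ge_sig[of \<sigma> r \<theta>] unfolding U_def by linarith
  qed
  have KU: "K * (\<sigma> / sqrt (real n)) \<le> K * U" using Un K0 by (rule mult_left_mono)
  define G where "G = {x\<in>space M. \<bar>alg1 n (haar n) lam (\<lambda>i. \<theta> i + \<epsilon> i x) - \<theta> 1\<bar> \<le> K * U}"
  have [measurable]: "(\<lambda>x. alg1 n (haar n) lam (\<lambda>i. \<theta> i + \<epsilon> i x)) \<in> borel_measurable M"
    by (rule alg1_meas[OF n_def rv])
  have Gm: "G \<in> events" unfolding G_def by measurable
  have bad_eq: "space M - G = {x\<in>space M. \<not> \<bar>alg1 n (haar n) lam (\<lambda>i. \<theta> i + \<epsilon> i x) - \<theta> 1\<bar> \<le> K * U}"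
    unfolding G_def by auto
  have rv1: "\<epsilon> 1 \<in> borel_measurable M" using rv n2 by auto
  have sg1: "sub_gaussian M \<sigma> (\<epsilon> 1)" using subg n2 by auto
  have bad: "measure M {x\<in>space M. \<not> \<bar>alg1 n (haar n) lam (\<lambda>i. \<theta> i + \<epsilon> i x) - \<theta> 1\<bar> \<le> K * U} \<le> \<delta>"
  proof -
  consider (pt) "m \<ge> 5 \<or> (m = 4 \<and> A \<ge> 9/8)" | (c1) "m = 1" | (c2) "m = 2" | (c3) "m = 3" | (c4) "m = 4" "A < 9/8"
    using m1 by linarith
  then show ?thesis
  proof cases
    case pt
    have A98: "A \<ge> 9/8"
    proof (cases "m \<ge> 5")
      case True
      have e1: "exp (9/64::real) \<le> 1 + 9/64 + (9/64)^2" by (rule exp_bound) auto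
      have "exp (9/8::real) = exp (9/64) ^ 8" using exp_of_nat_mult[of 8 "9/64::real"] by simp
      also have "\<dots> \<le> (1 + 9/64 + (9/64)^2) ^ 8" by (rule power_mono[OF e1]) simp
      also have "\<dots> \<le> 10/3" by (simp add: eval_nat_numeral power2_eq_square)
      also have "10/3 \<le> real m * ln 2"
        using mult_mono[of 5 "real m" "2/3" "ln 2"] True ln2 by simp
      also have "\<dots> < exp A" by (rule expA_gt)
      finally show ?thesis by simp
    next
      case False with pt show ?thesis by simp
    qed
    have A0: "A \<ge> 0" using A98 by simp
    have L2: "L^2 = 2 * A" unfolding L_def using A0 by simp
    have L32: "3/2 \<le> L" unfolding L_def using A98 by (intro real_le_rsqrt) (simp add: power2_eq_square)
    have key: "2 * (real m + 1) \<le> real m * ln 2 * exp (5/4 * A)"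
    proof (cases "m \<ge> 5")
      case True
      define q where "q = real m * ln 2"
      have q: "q \<ge> 2/3 * real m" unfolding q_def using mult_left_mono[OF ln2, of "real m"] by simp
      have "exp (5/4 * A) = exp A * exp (A/4)" by (simp add: exp_add[symmetric])
      also have "\<dots> \<ge> q * (41/32)"
      proof (rule mult_mono)
        show "q \<le> exp A" using expA_gt q_def by simp
        show "41/32 \<le> exp (A/4)" using exp_ge_add_one_self[of "A/4"] A98 by linarith
      qed auto
      finally have "q * exp (5/4 * A) \<ge> q * (q * (41/32))"
        using q by (intro mult_left_mono) auto
      moreover have "q * (q * (41/32)) \<ge> (2/3 * real m) * (2/3 * real m) * (41/32)"
      proof -
        have "0 \<le> 2/3 * real m" by simp
        hence "(2/3 * real m) * (2/3 * real m) \<le> q * q" using q by (intro mult_mono) auto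
        thus ?thesis by simp
      qed
      moreover have "(2/3 * real m) * (2/3 * real m) * (41/32) \<ge> 2 * (real m + 1)"
      proof -
        have m5: "real m \<ge> 5" using True by simp
        hence "real m * real m \<ge> 5 * real m" by (intro mult_right_mono) auto
        hence "144 * real m + 144 \<le> 41 * (real m * real m)" using m5 by linarith
        thus ?thesis by simp
      qed
      ultimately show ?thesis unfolding q_def by linarith
    next
      case False
      hence m4: "m = 4" using pt by simp
      have y: "(1 + 45/64 + (45/64)^2/2)^2 \<le> exp (45/32::real)" using exp_double_lower[of "45/64"] by simp
      have y2: "((38/10)::real) \<le> (1 + 45/64 + (45/64)^2/2)^2" by (simp add: power2_eq_square)
      have "exp (45/32::real) \<le> exp (5/4 * A)" using A98 by simp
      hence ex: "exp (5/4 * A) \<ge> (38/10)" using y y2 by linarith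
      have "4 * ln 2 \<ge> (8/3::real)" using ln2 by simp
      hence "4 * ln 2 * exp (5/4 * A) \<ge> 8/3 * (38/10)" using ex by (intro mult_mono) auto
      thus ?thesis using m4 by simp
    qed
    have tl: "2 * (m + 1) * exp (- (9/8) * L^2) \<le> \<delta>"
    proof -
      have e: "exp (- (9/8) * L^2) = exp (- A) * exp (- (5/4 * A))"
        unfolding L2 by (simp add: exp_add[symmetric])
      have "2 * (real m + 1) * exp (- (5/4 * A)) \<le> real m * ln 2"
        using key by (simp add: exp_minus field_simps)
      hence "2 * (real m + 1) * exp (- (5/4 * A)) * exp (- A) \<le> real m * ln 2 * exp (- A)"
        by (intro mult_right_mono) auto
      thus ?thesis unfolding e dA by (simp add: algebra_simps)
    qed
    show ?thesis by (rule bad_pt[OF P n_def rv indep subg sig L32 lam_def r U_def K4L tl])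
  next
    case c1
    have n2': "n = 2" using n_def c1 by simp
    have SW: "(\<Sum>k=0..m. \<bar>wt n k\<bar>) = 2 / sqrt 2" using SW1 n2' c1 by simp
    have sn: "sqrt (real n) = sqrt 2" using n2' by simp
    have K8: "8 * L \<le> K" using K4L c1 by simp
    have Kc: "4 * sqrt 2 \<le> K" using K2 c1 by simp
    have KUs: "K * (\<sigma> / sqrt 2) \<le> K * U" using KU sn by simp
    have dA1: "\<delta> = ln 2 * exp (- A)" using dA c1 by simp
    have s2: "2 / sqrt (2::real) = sqrt 2" by (simp add: real_div_sqrt)
    have KU4: "4 * \<sigma> \<le> K * U"
    proof -
      have "4 * \<sigma> = 4 * sqrt 2 * (\<sigma> / sqrt 2)" by simp
      also have "\<dots> \<le> K * (\<sigma> / sqrt 2)" using Kc sig by (intro mult_right_mono) auto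
      also note KUs
      finally show ?thesis .
    qed
    have e74: "exp (7/4::real) \<ge> 3"
    proof -
      have "1 + 7/4 + (7/4)^2/2 \<le> exp (7/4::real)" by (rule exp_lower_Taylor_quadratic) simp
      thus ?thesis by (simp add: power2_eq_square)
    qed
    consider (a) "A \<ge> 1/4" | (b) "0 \<le> A" "A < 1/4" | (c) "A < 0" by linarith
    then show ?thesis
    proof cases
      case a
      have L2: "L^2 = 2 * A" unfolding L_def using a by simp
      have L0: "L \<ge> 0" unfolding L_def using a by simp
      have sL: "\<sigma> * L \<ge> 0" using sig L0 by simp
      define w where "w = \<sigma> * L / sqrt 2"
      have w0: "w \<ge> 0" unfolding w_def using sL by simp
      have alam: "\<bar>lam\<bar> = 2 * (\<sigma> * L)" unfolding lam_def using sig L0 by simp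
      have KU8: "8 * w \<le> K * U"
      proof -
        have "8 * w = 8 * L * (\<sigma> / sqrt 2)" unfolding w_def by simp
        also have "\<dots> \<le> K * (\<sigma> / sqrt 2)" using K8 sig by (intro mult_right_mono) auto
        also note KUs
        finally show ?thesis .
      qed
      have lamSW: "\<bar>lam\<bar> * (\<Sum>k=0..m. \<bar>wt n k\<bar>) = 4 * w" unfolding SW alam w_def by simp
      have thr: "K * U - \<bar>lam\<bar> * (\<Sum>k=0..m. \<bar>wt n k\<bar>) \<ge> 4 * w" using KU8 lamSW by linarith
      have tl: "2 * exp (- ((4 * w)^2) / (2 * \<sigma>^2)) \<le> \<delta>"
      proof -
        have e: "- ((4 * w)^2) / (2 * \<sigma>^2) = - A + - (7 * A)"
          using sig L2 unfolding w_def by (simp add: power_mult_distrib power_divide field_simps)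
        have "1 + 7 * A + (7 * A)^2 / 2 \<le> exp (7 * A)" by (rule exp_lower_Taylor_quadratic) (use a in simp)
        moreover have "(7/4)^2 \<le> (7 * A)^2" using a by (intro power_mono) auto
        ultimately have "exp (7 * A) \<ge> 3" using a by (simp add: power2_eq_square)
        hence "exp (- (7 * A)) \<le> 1/3" by (simp add: exp_minus field_simps)
        hence "2 * (exp (- A) * exp (- (7 * A))) \<le> 2 * (exp (-A) * (1/3))" by (intro mult_left_mono) auto
        also have "\<dots> \<le> ln 2 * exp (-A)" using ln2 by simp
        finally show ?thesis unfolding e exp_add dA1 by (simp add: mult_ac)
      qed
      show ?thesis by (rule bad_crude[where K=K and U=U and lam=lam and thr="4 * w" and \<epsilon>=\<epsilon> and \<theta>=\<theta>, OF P n_def rv1 sg1 sig _ thr tl]) (use w0 in simp)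
    next
      case b
      have L0: "L \<ge> 0" unfolding L_def using b by simp
      have sl1: "sqrt 2 * L \<le> 1"
      proof -
        have "sqrt 2 * L = sqrt (4 * A)" unfolding L_def by (simp flip: real_sqrt_mult)
        also have "\<dots> \<le> sqrt 1" using b by (subst real_sqrt_le_iff) simp
        finally show ?thesis by simp
      qed
      have alam: "\<bar>lam\<bar> = 2 * \<sigma> * L" unfolding lam_def using sig L0 by simp
      have "\<bar>lam\<bar> * (\<Sum>k=0..m. \<bar>wt n k\<bar>) = 2 * \<sigma> * (sqrt 2 * L)" unfolding SW alam s2 by simp
      also have "\<dots> \<le> 2 * \<sigma> * 1" using sl1 sig by (intro mult_left_mono) auto
      finally have lamSW: "\<bar>lam\<bar> * (\<Sum>k=0..m. \<bar>wt n k\<bar>) \<le> 2 * \<sigma>" by simp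
      have thr: "K * U - \<bar>lam\<bar> * (\<Sum>k=0..m. \<bar>wt n k\<bar>) \<ge> 2 * \<sigma>" using KU4 lamSW by linarith
      have tl: "2 * exp (- ((2 * \<sigma>)^2) / (2 * \<sigma>^2)) \<le> \<delta>"
      proof -
        have e: "- ((2 * \<sigma>)^2) / (2 * \<sigma>^2) = - (1/4) + - (7/4)"
          using sig by (simp add: power_mult_distrib field_simps)
        have "exp (- (7/4::real)) \<le> 1/3" using e74 by (simp add: exp_minus field_simps)
        hence "2 * (exp (- (1/4)) * exp (- (7/4::real))) \<le> 2 * (exp (- (1/4)) * (1/3))" by (intro mult_left_mono) auto
        also have "\<dots> \<le> ln 2 * exp (- (1/4))" using ln2 by simp
        also have "\<dots> \<le> ln 2 * exp (- A)" using b ln2 by (intro mult_left_mono) auto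
        finally show ?thesis unfolding e exp_add dA1 by (simp add: mult_ac)
      qed
      show ?thesis by (rule bad_crude[where K=K and U=U and lam=lam and thr="2 * \<sigma>" and \<epsilon>=\<epsilon> and \<theta>=\<theta>, OF P n_def rv1 sg1 sig _ thr tl]) (use sig in simp)
    next
      case c
      define u where "u = - A"
      have u0: "u > 0" using c by (simp add: u_def)
      have Lu: "L = - (sqrt 2 * sqrt u)" unfolding L_def u_def
        by (simp add: real_sqrt_minus[symmetric] real_sqrt_mult[symmetric])
      have alam: "\<bar>lam\<bar> = 2 * \<sigma> * (sqrt 2 * sqrt u)" unfolding lam_def Lu using sig u0 by (simp add: abs_mult)
      have lamSW: "\<bar>lam\<bar> * (\<Sum>k=0..m. \<bar>wt n k\<bar>) = 4 * \<sigma> * sqrt u"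
        unfolding SW alam s2 by simp
      have du: "\<delta> = ln 2 * exp u" using dA1 u_def by simp
      have eu: "exp u < 3/2"
      proof -
        have "ln 2 * exp u < 1" using du d1 by simp
        hence "2/3 * exp u < 1" using ln2 by (smt (verit) exp_gt_zero mult_right_mono)
        thus ?thesis by simp
      qed
      have u41: "u < 41/100"
      proof (rule ccontr)
        assume "\<not> u < 41/100"
        hence "exp (41/100::real) \<le> exp u" by simp
        moreover have "(1 + 41/200 + (41/200)^2/2)^2 \<le> exp (41/100::real)"
          using exp_double_lower[of "41/200"] by simp
        moreover have "(3/2::real) \<le> (1 + 41/200 + (41/200)^2/2)^2" by (simp add: power2_eq_square)
        ultimately show False using eu by linarith
      qed
      show ?thesis
      proof (cases "u \<le> 1/5")
        case True
        have "sqrt u \<le> 9/20" by (rule sqrt_sq_le) (use True in \<open>simp_all add: power2_eq_square\<close>)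
        hence "4 * \<sigma> * sqrt u \<le> 4 * \<sigma> * (9/20)" using sig by (intro mult_left_mono) auto
        hence thr: "K * U - \<bar>lam\<bar> * (\<Sum>k=0..m. \<bar>wt n k\<bar>) \<ge> 11/5 * \<sigma>" using KU4 lamSW by linarith
        have tl: "2 * exp (- ((11/5 * \<sigma>)^2) / (2 * \<sigma>^2)) \<le> \<delta>"
        proof -
          have e: "- ((11/5 * \<sigma>)^2) / (2 * \<sigma>^2) = - (121/50)"
            using sig by (simp add: power_mult_distrib field_simps)
          have "exp (121/50::real) \<ge> 3" using exp_ge_add_one_self[of "121/50::real"] by linarith
          hence "exp (- (121/50::real)) \<le> 1/3" by (simp add: exp_minus field_simps)
          hence "2 * exp (- (121/50::real)) \<le> ln 2" using ln2 by linarith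
          also have "ln 2 \<le> ln 2 * exp u" using u0 ln2 by simp
          finally show ?thesis unfolding e du .
        qed
        show ?thesis by (rule bad_crude[where K=K and U=U and lam=lam and thr="11/5 * \<sigma>" and \<epsilon>=\<epsilon> and \<theta>=\<theta>, OF P n_def rv1 sg1 sig _ thr tl]) (use sig in simp)
      next
        case False
        have "sqrt u \<le> 6404/10000" by (rule sqrt_sq_le) (use u41 in \<open>simp_all add: power2_eq_square\<close>)
        hence "4 * \<sigma> * sqrt u \<le> 4 * \<sigma> * (6404/10000)" using sig by (intro mult_left_mono) auto
        also have "4 * \<sigma> * (6404/10000) = 1601/625 * \<sigma>" by simp
        finally have thr: "K * U - \<bar>lam\<bar> * (\<Sum>k=0..m. \<bar>wt n k\<bar>) \<ge> 143/100 * \<sigma>" using KU4 lamSW sig by linarith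
        have tl: "2 * exp (- ((143/100 * \<sigma>)^2) / (2 * \<sigma>^2)) \<le> \<delta>"
        proof -
          have e: "- ((143/100 * \<sigma>)^2) / (2 * \<sigma>^2) = - (20449/20000)"
            using sig by (simp add: power_mult_distrib field_simps)
          have "1 + 20449/20000 + (20449/20000)^2/2 \<le> exp (20449/20000::real)"
            by (rule exp_lower_Taylor_quadratic) simp
          hence "exp (20449/20000::real) \<ge> 5/2" by (simp add: power2_eq_square)
          hence "exp (- (20449/20000::real)) \<le> 2/5" by (simp add: exp_minus field_simps)
          hence "2 * exp (- (20449/20000::real)) \<le> 4/5" by linarith
          also have "(4/5::real) \<le> 2/3 * (6/5)" by simp
          also have "\<dots> \<le> ln 2 * exp u"
          proof (rule mult_mono)
            show "6/5 \<le> exp u" using exp_ge_add_one_self[of u] False by linarith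
          qed (use ln2 in auto)
          finally show ?thesis unfolding e du .
        qed
        show ?thesis by (rule bad_crude[where K=K and U=U and lam=lam and thr="143/100 * \<sigma>" and \<epsilon>=\<epsilon> and \<theta>=\<theta>, OF P n_def rv1 sg1 sig _ thr tl]) (use sig in simp)
      qed
    qed
  next
    case c2
    have n4: "n = 4" using n_def c2 by simp
    have SW: "(\<Sum>k=0..m. \<bar>wt n k\<bar>) = 1 + 1 / sqrt 2" using SW2 n4 c2 by simp
    have isq: "1 / sqrt (2::real) \<le> (70712/100000)" using sqrt2_bounds(1) by (simp add: divide_le_eq)
    have e43: "exp A > 4/3" using expA_gt c2 ln2 by simp
    have A14: "A \<ge> 1/4"
    proof (rule ccontr)
      assume "\<not> A \<ge> 1/4"
      hence "exp A \<le> exp (1/4)" by simp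
      also have "exp (1/4::real) \<le> 1 + 1/4 + (1/4)^2" by (rule exp_bound) auto
      finally show False using e43 by (simp add: power2_eq_square)
    qed
    have L2: "L^2 = 2 * A" unfolding L_def using A14 by simp
    have L0: "L \<ge> 0" unfolding L_def using A14 by simp
    have sL: "\<sigma> * L \<ge> 0" using sig L0 by simp
    have alam: "\<bar>lam\<bar> = 2 * (\<sigma> * L)" unfolding lam_def using sig L0 by simp
    have sn: "sqrt (real n) = 2" using n4 s4 by simp
    have KU6: "K * U \<ge> 6 * (\<sigma> * L)"
    proof -
      have "12 * L \<le> K" using K4L c2 by simp
      have "6 * (\<sigma> * L) = 12 * L * (\<sigma> / 2)" by simp
      also have "\<dots> \<le> K * (\<sigma> / 2)" using sig \<open>12 * L \<le> K\<close> by (intro mult_right_mono) auto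
      also have "\<dots> = K * (\<sigma> / sqrt (real n))" using sn by simp
      also have "\<dots> \<le> K * U" by (rule KU)
      finally show ?thesis .
    qed
    have "2 * (1 + 1 / sqrt 2) = 2 + 2 * (1 / sqrt (2::real))" by simp
    hence cb: "2 * (1 + 1 / sqrt 2) \<le> (341424/100000::real)" using isq by linarith
    have lamSW: "\<bar>lam\<bar> * (\<Sum>k=0..m. \<bar>wt n k\<bar>) \<le> (341424/100000) * (\<sigma> * L)"
    proof -
      have "\<bar>lam\<bar> * (\<Sum>k=0..m. \<bar>wt n k\<bar>) = (2 * (1 + 1 / sqrt 2)) * (\<sigma> * L)" unfolding SW alam by simp
      also have "\<dots> \<le> (341424/100000) * (\<sigma> * L)" using cb sL by (rule mult_right_mono)
      finally show ?thesis .
    qed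
    have thr: "K * U - \<bar>lam\<bar> * (\<Sum>k=0..m. \<bar>wt n k\<bar>) \<ge> 5/2 * (\<sigma> * L)"
      using KU6 lamSW sL by linarith
    have tl: "2 * exp (- ((5/2 * (\<sigma> * L))^2) / (2 * \<sigma>^2)) \<le> \<delta>"
    proof -
      have e: "- ((5/2 * (\<sigma> * L))^2) / (2 * \<sigma>^2) = - A + - (21/4 * A)"
        using sig L2 by (simp add: power_mult_distrib field_simps)
      have "exp (21/4 * A) \<ge> 3/2" using exp_ge_add_one_self[of "21/4 * A"] A14 by linarith
      hence "exp (- (21/4 * A)) \<le> 2/3" by (simp add: exp_minus field_simps)
      hence "exp (- (21/4 * A)) \<le> ln 2" using ln2 by linarith
      hence "2 * (exp (- A) * exp (- (21/4 * A))) \<le> 2 * (exp (-A) * ln 2)" by (intro mult_left_mono) auto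
      thus ?thesis unfolding e exp_add dA c2 by (simp add: mult_ac)
    qed
    show ?thesis by (rule bad_crude[where K=K and U=U and lam=lam and thr="5/2 * (\<sigma> * L)" and \<epsilon>=\<epsilon> and \<theta>=\<theta>, OF P n_def rv1 sg1 sig _ thr tl]) (use sL in simp)
  next
    case c3
    have n8: "n = 8" using n_def c3 by simp
    have SW: "(\<Sum>k=0..m. \<bar>wt n k\<bar>) = 1/2 + 2 / sqrt 2" using SW3 n8 c3 by simp
    have isq: "1 / sqrt (2::real) \<le> (70712/100000)" using sqrt2_bounds(1) by (simp add: divide_le_eq)
    have "real m * ln 2 = 3 * ln 2" using c3 by simp
    hence e1: "exp A > 1" using expA_gt ln2 by linarith
    have A0: "A \<ge> 0" using e1 by (simp add: less_imp_le)
    have L2: "L^2 = 2 * A" unfolding L_def using A0 by simp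
    have L0: "L \<ge> 0" unfolding L_def using A0 by simp
    have sL: "\<sigma> * L \<ge> 0" using sig L0 by simp
    have alam: "\<bar>lam\<bar> = 2 * (\<sigma> * L)" unfolding lam_def using sig L0 by simp
    have sn: "sqrt (real n) = 2 * sqrt 2" using n8 s8 by simp
    have KU6: "K * U \<ge> (5656/1000) * (\<sigma> * L)"
    proof -
      have "16 * L \<le> K" using K4L c3 by simp
      hence "16 * L * (\<sigma> / (2 * sqrt 2)) \<le> K * (\<sigma> / (2 * sqrt 2))" using sig by (intro mult_right_mono) auto
      also have "K * (\<sigma> / (2 * sqrt 2)) = K * (\<sigma> / sqrt (real n))" using sn by simp
      also have "\<dots> \<le> K * U" by (rule KU)
      finally have a: "16 * L * (\<sigma> / (2 * sqrt 2)) \<le> K * U" .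
      have "(5656/1000) * sqrt 2 \<le> 8" using sqrt2_bounds(2) by simp
      hence "(5656/1000) \<le> 8 / sqrt 2" by (simp add: le_divide_eq)
      hence "(5656/1000) * (\<sigma> * L) \<le> 8 / sqrt 2 * (\<sigma> * L)" using sL by (intro mult_right_mono) auto
      also have "8 / sqrt 2 * (\<sigma> * L) = 16 * L * (\<sigma> / (2 * sqrt 2))" by simp
      also note a
      finally show ?thesis .
    qed
    have "2 * (1/2 + 2 / sqrt 2) = 1 + 4 * (1 / sqrt (2::real))" by simp
    hence cb: "2 * (1/2 + 2 / sqrt 2) \<le> (382848/100000::real)" using isq by linarith
    have lamSW: "\<bar>lam\<bar> * (\<Sum>k=0..m. \<bar>wt n k\<bar>) \<le> (382848/100000) * (\<sigma> * L)"
    proof -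
      have "\<bar>lam\<bar> * (\<Sum>k=0..m. \<bar>wt n k\<bar>) = (2 * (1/2 + 2 / sqrt 2)) * (\<sigma> * L)" unfolding SW alam by simp
      also have "\<dots> \<le> (382848/100000) * (\<sigma> * L)" using cb sL by (rule mult_right_mono)
      finally show ?thesis .
    qed
    have thr: "K * U - \<bar>lam\<bar> * (\<Sum>k=0..m. \<bar>wt n k\<bar>) \<ge> 9/5 * (\<sigma> * L)"
      using KU6 lamSW sL by linarith
    have tl: "2 * exp (- ((9/5 * (\<sigma> * L))^2) / (2 * \<sigma>^2)) \<le> \<delta>"
    proof -
      have e: "- ((9/5 * (\<sigma> * L))^2) / (2 * \<sigma>^2) = - A + - (56/25 * A)"
        using sig L2 by (simp add: power_mult_distrib field_simps)
      have "exp (- (56/25 * A)) \<le> 1" using A0 by simp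
      hence "2 * (exp (- A) * exp (- (56/25 * A))) \<le> 2 * exp (-A)" by (simp add: mult_left_le)
      also have "\<dots> \<le> 3 * ln 2 * exp (-A)" using ln2 by (intro mult_right_mono) auto
      finally show ?thesis unfolding e exp_add dA c3 by (simp add: mult_ac)
    qed
    show ?thesis by (rule bad_crude[where K=K and U=U and lam=lam and thr="9/5 * (\<sigma> * L)" and \<epsilon>=\<epsilon> and \<theta>=\<theta>, OF P n_def rv1 sg1 sig _ thr tl]) (use sL in simp)
  next
    case c4
    have n16: "n = 16" using n_def c4 by simp
    have SW: "(\<Sum>k=0..m. \<bar>wt n k\<bar>) = 1 + 3 / (2 * sqrt 2)" using SW4 n16 c4 by simp
    have isq: "1 / sqrt (2::real) \<le> (70712/100000)" using sqrt2_bounds(1) by (simp add: divide_le_eq)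
    have "real m * ln 2 = 4 * ln 2" using c4 by simp
    hence e1: "exp A > 1" using expA_gt ln2 by linarith
    have A0: "A \<ge> 0" using e1 by (simp add: less_imp_le)
    have L2: "L^2 = 2 * A" unfolding L_def using A0 by simp
    have L0: "L \<ge> 0" unfolding L_def using A0 by simp
    have sL: "\<sigma> * L \<ge> 0" using sig L0 by simp
    have alam: "\<bar>lam\<bar> = 2 * (\<sigma> * L)" unfolding lam_def using sig L0 by simp
    have sn: "sqrt (real n) = 4" using n16 s16 by simp
    have KU6: "K * U \<ge> 5 * (\<sigma> * L)"
    proof -
      have "20 * L \<le> K" using K4L c4 by simp
      have "5 * (\<sigma> * L) = 20 * L * (\<sigma> / 4)" by simp
      also have "\<dots> \<le> K * (\<sigma> / 4)" using sig \<open>20 * L \<le> K\<close> by (intro mult_right_mono) auto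
      also have "\<dots> = K * (\<sigma> / sqrt (real n))" using sn by simp
      also have "\<dots> \<le> K * U" by (rule KU)
      finally show ?thesis .
    qed
    have "3 / (2 * sqrt (2::real)) = 3/2 * (1 / sqrt 2)" by simp
    hence isq3: "3 / (2 * sqrt (2::real)) \<le> 3/2 * (70712/100000)" using isq by linarith
    have "2 * (1 + 3 / (2 * sqrt 2)) = 2 + 2 * (3 / (2 * sqrt (2::real)))" by simp
    hence cb: "2 * (1 + 3 / (2 * sqrt 2)) \<le> (412136/100000::real)" using isq3 by linarith
    have lamSW: "\<bar>lam\<bar> * (\<Sum>k=0..m. \<bar>wt n k\<bar>) \<le> (412136/100000) * (\<sigma> * L)"
    proof -
      have "\<bar>lam\<bar> * (\<Sum>k=0..m. \<bar>wt n k\<bar>) = (2 * (1 + 3 / (2 * sqrt 2))) * (\<sigma> * L)" unfolding SW alam by simp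
      also have "\<dots> \<le> (412136/100000) * (\<sigma> * L)" using cb sL by (rule mult_right_mono)
      finally show ?thesis .
    qed
    have thr: "K * U - \<bar>lam\<bar> * (\<Sum>k=0..m. \<bar>wt n k\<bar>) \<ge> (878/1000) * (\<sigma> * L)"
      using KU6 lamSW sL by linarith
    have tl: "2 * exp (- (((878/1000) * (\<sigma> * L))^2) / (2 * \<sigma>^2)) \<le> \<delta>"
    proof -
      define x where "x = (229116/1000000) * A"
      have e: "- (((878/1000) * (\<sigma> * L))^2) / (2 * \<sigma>^2) = - A + x"
        using sig L2 unfolding x_def by (simp add: power_mult_distrib field_simps)
      have x0: "0 \<le> x" "x \<le> (2578/10000)" using A0 c4 unfolding x_def by auto
      have "exp x \<le> 1 + x + x^2" by (rule exp_bound) (use x0 in auto)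
      also have "x^2 \<le> (2578/10000)^2" using x0 by (intro power_mono) auto
      hence "1 + x + x^2 \<le> 4/3" using x0 by (simp add: power2_eq_square)
      finally have "exp x \<le> 4/3" by simp
      hence "2 * (exp (- A) * exp x) \<le> 2 * (exp (-A) * (4/3))" by (intro mult_left_mono) auto
      also have "\<dots> \<le> 4 * ln 2 * exp (-A)" using ln2 by simp
      finally show ?thesis unfolding e exp_add dA c4 by (simp add: mult_ac)
    qed
    show ?thesis by (rule bad_crude[where K=K and U=U and lam=lam and thr="(878/1000) * (\<sigma> * L)" and \<epsilon>=\<epsilon> and \<theta>=\<theta>, OF P n_def rv1 sg1 sig _ thr tl]) (use sL in simp)
  qed
  qed
  have "prob G \<ge> 1 - \<delta>" using prob_compl[OF Gm] bad bad_eq by simp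
  thus ?thesis unfolding G_def lam_def L_def A_def K_def U_def r_def .
qed

end
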